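(* Let $k\ge 3$ be an integer and let $D$ be an oriented graph on $n\ge 1$ vertices such that for every vertex $x$, the in-neighbourhood $x^-$ induces a tournament, and such that $D$ has no directed cycle of length at most $k$. Then $D$ has a vertex of out-degree strictly less than $n/k$.
   Context: Digraphs are finite, no loops, no parallel arcs; an oriented graph has no digon. $x^-$ is the in-neighbourhood of $x$; the out-degree of $x$ is the number of out-neighbours. *)

theory Defs
  imports Complex_Main
begin

text \<open>A digraph is given by a vertex set V and an arc set A (pairs (u,v) meaning u -> v).\<close>

definition oriented_graph :: "'a set \<Rightarrow> ('a \<times> 'a) set \<Rightarrow> bool" where
  "oriented_graph V A \<longleftrightarrow> finite V \<and> A \<subseteq> V \<times> V
     \<and> (\<forall>x. (x, x) \<notin> A) \<and> (\<forall>x y. (x, y) \<in> A \<longrightarrow> (y, x) \<notin> A)"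

definition in_nbhd :: "('a \<times> 'a) set \<Rightarrow> 'a \<Rightarrow> 'a set" where
  "in_nbhd A x = {y. (y, x) \<in> A}"

definition out_nbhd :: "('a \<times> 'a) set \<Rightarrow> 'a \<Rightarrow> 'a set" where
  "out_nbhd A x = {y. (x, y) \<in> A}"

definition out_degree :: "('a \<times> 'a) set \<Rightarrow> 'a \<Rightarrow> nat" where
  "out_degree A x = card (out_nbhd A x)"

definition induces_tournament :: "('a \<times> 'a) set \<Rightarrow> 'a set \<Rightarrow> bool" where
  "induces_tournament A S \<longleftrightarrow>
     (\<forall>x\<in>S. \<forall>y\<in>S. x \<noteq> y \<longrightarrow> (x, y) \<in> A \<or> (y, x) \<in> A)"

definition has_dicycle_of_length :: "'a set \<Rightarrow> ('a \<times> 'a) set \<Rightarrow> nat \<Rightarrow> bool" where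
  "has_dicycle_of_length V A l \<longleftrightarrow> l \<ge> 2 \<and>
     (\<exists>c :: nat \<Rightarrow> 'a. inj_on c {..<l} \<and> c ` {..<l} \<subseteq> V \<and>
        (\<forall>i<l. (c i, c (Suc i mod l)) \<in> A))"

end

theory Submission
  imports Defs
begin

fun walk :: "('a \<times> 'a) set \<Rightarrow> 'a \<Rightarrow> nat \<Rightarrow> 'a \<Rightarrow> bool" where
  "walk A a 0 b = (a = b)"
| "walk A a (Suc L) b = (\<exists>c. (a, c) \<in> A \<and> walk A c L b)"

lemma walk_append: "walk A a L b \<Longrightarrow> walk A b M c \<Longrightarrow> walk A a (L + M) c"
  by (induction L arbitrary: a) auto

lemma walk_fun:
  "walk A a L b \<Longrightarrow> \<exists>c. c 0 = a \<and> c L = b \<and> (\<forall>m<L. (c m, c (Suc m)) \<in> A)"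
proof (induction L arbitrary: a)
  case 0 then show ?case by (intro exI[of _ "\<lambda>_. a"]) auto
next
  case (Suc L)
  then obtain d where d: "(a, d) \<in> A" "walk A d L b" by auto
  with Suc.IH obtain c where c: "c 0 = d" "c L = b" "\<forall>m<L. (c m, c (Suc m)) \<in> A" by blast
  show ?case
  proof (intro exI[of _ "\<lambda>m. if m = 0 then a else c (m - 1)"] conjI allI impI)
    fix m assume "m < Suc L"
    then show "((if m = 0 then a else c (m - 1)), (if Suc m = 0 then a else c (Suc m - 1))) \<in> A"
      using c d by (cases m) auto
  qed (use c in auto)
qed

lemma closed_fun_cycle:
  assumes og: "oriented_graph V A"
  shows "1 \<le> L \<Longrightarrow> c L = c 0 \<Longrightarrow> (\<forall>m<L. (c m, c (Suc m)) \<in> A)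
    \<Longrightarrow> \<exists>l\<le>L. has_dicycle_of_length V A l"
proof (induction L arbitrary: c rule: less_induct)
  case (less L)
  show ?case
  proof (cases "inj_on c {..<L}")
    case True
    have AV: "A \<subseteq> V \<times> V" and nl: "\<forall>x. (x, x) \<notin> A" using og by (auto simp: oriented_graph_def)
    have L2: "L \<ge> 2"
    proof (rule ccontr)
      assume "\<not> L \<ge> 2"
      then have "L = 1" using less.prems by auto
      then show False using less.prems nl by auto
    qed
    have "has_dicycle_of_length V A L"
      unfolding has_dicycle_of_length_def
    proof (intro conjI exI[of _ c] ballI allI impI subsetI)
      show "inj_on c {..<L}" by fact
      fix y assume "y \<in> c ` {..<L}"
      then obtain i where "i < L" "y = c i" by auto
      then show "y \<in> V" using less.prems AV by force
    next
      fix i assume i: "i < L"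
      show "(c i, c (Suc i mod L)) \<in> A"
      proof (cases "Suc i < L")
        case True then show ?thesis using less.prems i by auto
      next
        case False
        then have "Suc i = L" using i by auto
        then show ?thesis using less.prems i by auto
      qed
    qed (use L2 in auto)
    then show ?thesis by auto
  next
    case False
    then obtain i j where ij: "i < L" "j < L" "i \<noteq> j" "c i = c j"
      unfolding inj_on_def by auto
    then obtain i j where ij: "i < j" "j < L" "c i = c j"
      by (metis linorder_neqE_nat)
    define c' where "c' m = c (i + m)" for m
    have "\<exists>l\<le>j - i. has_dicycle_of_length V A l"
    proof (rule less.IH)
      show "j - i < L" using ij by auto
      show "1 \<le> j - i" using ij by auto
      show "c' (j - i) = c' 0" using ij by (auto simp: c'_def)
      show "\<forall>m<j - i. (c' m, c' (Suc m)) \<in> A"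
        using less.prems ij by (auto simp: c'_def)
    qed
    then obtain l where "l \<le> j - i" "has_dicycle_of_length V A l" by blast
    moreover have "l \<le> L" using \<open>l \<le> j - i\<close> ij by linarith
    ultimately show ?thesis by blast
  qed
qed

lemma closed_walk_cycle:
  assumes "oriented_graph V A" "walk A a L a" "1 \<le> L"
  shows "\<exists>l\<le>L. has_dicycle_of_length V A l"
proof -
  obtain c where "c 0 = a" "c L = a" "\<forall>m<L. (c m, c (Suc m)) \<in> A"
    using walk_fun[OF assms(2)] by blast
  then show ?thesis using closed_fun_cycle[OF assms(1) assms(3)] by auto
qed

lemma source_exists:
  assumes og: "oriented_graph V A" and fin: "finite S" and ne: "S \<noteq> {}"
    and tour: "\<forall>x\<in>S. \<forall>y\<in>S. x \<noteq> y \<longrightarrow> (x, y) \<in> A \<or> (y, x) \<in> A"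
    and no3: "\<forall>a b c. (a, b) \<in> A \<longrightarrow> (b, c) \<in> A \<longrightarrow> (c, a) \<notin> A"
  shows "\<exists>a\<in>S. \<forall>b\<in>S. b \<noteq> a \<longrightarrow> (a, b) \<in> A"
proof -
  define f where "f a = card (out_nbhd A a \<inter> S)" for a
  define M where "M = Max (f ` S)"
  have "M \<in> f ` S" unfolding M_def using fin ne by auto
  then obtain a where a: "a \<in> S" "f a = M" by auto
  have maxa: "f b \<le> f a" if "b \<in> S" for b
    using that a fin unfolding M_def by auto
  have nl: "\<forall>x. (x, x) \<notin> A" and asym: "\<forall>x y. (x, y) \<in> A \<longrightarrow> (y, x) \<notin> A"
    using og by (auto simp: oriented_graph_def)
  show ?thesis
  proof (rule bexI[OF _ a(1)], intro ballI impI, rule ccontr)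
    fix b assume b: "b \<in> S" "b \<noteq> a" "(a, b) \<notin> A"
    then have ba: "(b, a) \<in> A" using tour a by blast
    have sub: "out_nbhd A a \<inter> S \<subset> out_nbhd A b \<inter> S"
    proof
      show "out_nbhd A a \<inter> S \<subseteq> out_nbhd A b \<inter> S"
      proof
        fix c assume c: "c \<in> out_nbhd A a \<inter> S"
        then have ac: "(a, c) \<in> A" "c \<in> S" by (auto simp: out_nbhd_def)
        have "c \<noteq> b" using ac b by auto
        moreover have "(c, b) \<notin> A" using no3 ac ba by blast
        ultimately have "(b, c) \<in> A" using tour ac b by blast
        then show "c \<in> out_nbhd A b \<inter> S" using ac by (auto simp: out_nbhd_def)
      qed
      have "a \<in> out_nbhd A b \<inter> S" "a \<notin> out_nbhd A a \<inter> S"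
        using ba a nl by (auto simp: out_nbhd_def)
      then show "out_nbhd A a \<inter> S \<noteq> out_nbhd A b \<inter> S" by blast
    qed
    have "f a < f b" unfolding f_def by (rule psubset_card_mono) (use fin sub in auto)
    then show False using maxa[OF b(1)] by auto
  qed
qed

lemma restrict_ok:
  assumes og: "oriented_graph V A"
    and tour: "\<forall>x\<in>V. induces_tournament A (in_nbhd A x)"
    and nocyc: "\<forall>l. l \<le> k \<longrightarrow> \<not> has_dicycle_of_length V A l"
    and sub: "V' \<subseteq> V"
  shows "oriented_graph V' (A \<inter> (V' \<times> V'))"
    and "\<forall>x\<in>V'. induces_tournament (A \<inter> (V' \<times> V')) (in_nbhd (A \<inter> (V' \<times> V')) x)"
    and "\<forall>l. l \<le> k \<longrightarrow> \<not> has_dicycle_of_length V' (A \<inter> (V' \<times> V')) l"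
proof -
  show "oriented_graph V' (A \<inter> (V' \<times> V'))"
    using og sub unfolding oriented_graph_def by (auto intro: finite_subset)
  show "\<forall>x\<in>V'. induces_tournament (A \<inter> (V' \<times> V')) (in_nbhd (A \<inter> (V' \<times> V')) x)"
  proof
    fix x assume x: "x \<in> V'"
    then have "induces_tournament A (in_nbhd A x)" using tour sub by auto
    then show "induces_tournament (A \<inter> (V' \<times> V')) (in_nbhd (A \<inter> (V' \<times> V')) x)"
      unfolding induces_tournament_def in_nbhd_def by auto
  qed
  show "\<forall>l. l \<le> k \<longrightarrow> \<not> has_dicycle_of_length V' (A \<inter> (V' \<times> V')) l"
  proof (intro allI impI notI)
    fix l assume l: "l \<le> k" and h: "has_dicycle_of_length V' (A \<inter> (V' \<times> V')) l"
    then have "has_dicycle_of_length V A l"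
      using sub unfolding has_dicycle_of_length_def by blast
    then show False using nocyc l by auto
  qed
qed

lemma chain_walk:
  assumes "\<forall>m. (x (Suc m), x m) \<in> A"
  shows "walk A (x (i + L)) L (x i)"
  using assms by (induction L) auto

lemma out_deg_split:
  assumes og: "oriented_graph V A" and w: "w \<in> V'" and sub: "V' \<subseteq> V"
  shows "out_degree A w \<le> out_degree (A \<inter> (V' \<times> V')) w + card (out_nbhd A w \<inter> (V - V'))"
proof -
  have fin: "finite V" and AV: "A \<subseteq> V \<times> V" using og by (auto simp: oriented_graph_def)
  have "out_nbhd A w \<subseteq> out_nbhd (A \<inter> (V' \<times> V')) w \<union> (out_nbhd A w \<inter> (V - V'))"
    using w AV by (auto simp: out_nbhd_def)
  moreover have "finite (out_nbhd A w)" using AV fin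
    by (auto simp: out_nbhd_def intro: finite_subset[of _ V])
  ultimately have "card (out_nbhd A w) \<le> card (out_nbhd (A \<inter> (V' \<times> V')) w \<union> (out_nbhd A w \<inter> (V - V')))"
    by (intro card_mono) (auto simp: out_nbhd_def intro: finite_subset)
  also have "\<dots> \<le> card (out_nbhd (A \<inter> (V' \<times> V')) w) + card (out_nbhd A w \<inter> (V - V'))"
    by (rule card_Un_le)
  finally show ?thesis unfolding out_degree_def .
qed

lemma main:
  fixes V :: "'a set" and A :: "('a \<times> 'a) set" and k :: nat
  shows "k \<ge> 3 \<Longrightarrow> oriented_graph V A \<Longrightarrow> card V \<ge> 1
    \<Longrightarrow> \<forall>x\<in>V. induces_tournament A (in_nbhd A x)
    \<Longrightarrow> \<forall>l. l \<le> k \<longrightarrow> \<not> has_dicycle_of_length V A l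
    \<Longrightarrow> \<exists>x\<in>V. real (out_degree A x) < real (card V) / real k"
proof (induction "card V" arbitrary: V A rule: less_induct)
  case less
  note k3 = less.prems(1) and og = less.prems(2) and cV = less.prems(3)
    and tour = less.prems(4) and nocyc = less.prems(5)
  have fin: "finite V" and AV: "A \<subseteq> V \<times> V" and nl: "\<forall>x. (x, x) \<notin> A"
    using og by (auto simp: oriented_graph_def)
  have kpos: "real k > 0" using k3 by auto
  have nowalk: "\<not> walk A a L a" if "1 \<le> L" "L \<le> k" for a L
    using closed_walk_cycle[OF og _ that(1)] nocyc that(2) by (meson le_trans)
  show ?case
  proof (cases "\<exists>z\<in>V. in_nbhd A z = {}")
    case True
    then obtain z where z: "z \<in> V" "in_nbhd A z = {}" by auto
    show ?thesis
    proof (cases "card V = 1")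
      case True
      then have "V = {z}" using z by (metis card_1_singletonE singletonD)
      then have "out_nbhd A z = {}" using AV nl by (auto simp: out_nbhd_def)
      then have "real (out_degree A z) < real (card V) / real k" using True kpos by (simp add: out_degree_def)
      then show ?thesis using z by blast
    next
      case False
      define V' where "V' = V - {z}"
      have sub: "V' \<subseteq> V" by (auto simp: V'_def)
      have cV': "card V' = card V - 1" using z by (simp add: V'_def)
      note r = restrict_ok[OF og tour nocyc sub]
      obtain w where w: "w \<in> V'" "real (out_degree (A \<inter> (V' \<times> V')) w) < real (card V') / real k"
        using less.hyps[OF _ k3 r(1) _ r(2) r(3)] cV' cV False by fastforce
      have "out_nbhd A w \<inter> (V - V') = {}"
        using z by (auto simp: V'_def out_nbhd_def in_nbhd_def)
      then have "out_degree A w \<le> out_degree (A \<inter> (V' \<times> V')) w"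
        using out_deg_split[OF og w(1) sub] by simp
      moreover have "real (card V') / real k \<le> real (card V) / real k"
        using cV' kpos by (intro divide_right_mono) auto
      ultimately show ?thesis using w sub by force
    qed
  next
    case False
    then have nonempty: "\<forall>z\<in>V. in_nbhd A z \<noteq> {}" by auto
    have no3: "\<forall>a b c. (a, b) \<in> A \<longrightarrow> (b, c) \<in> A \<longrightarrow> (c, a) \<notin> A"
    proof (intro allI impI notI)
      fix a b c assume "(a, b) \<in> A" "(b, c) \<in> A" "(c, a) \<in> A"
      then have "walk A a 3 a" by (auto simp: numeral_3_eq_3)
      then show False using nowalk[of 3 a] k3 by auto
    qed
    have "\<forall>w\<in>V. \<exists>a. a \<in> in_nbhd A w \<and> (\<forall>b\<in>in_nbhd A w. b \<noteq> a \<longrightarrow> (a, b) \<in> A)"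
    proof
      fix w assume w: "w \<in> V"
      have "finite (in_nbhd A w)" using AV fin
        by (auto simp: in_nbhd_def intro: finite_subset[of _ V])
      moreover have "\<forall>x\<in>in_nbhd A w. \<forall>y\<in>in_nbhd A w. x \<noteq> y \<longrightarrow> (x, y) \<in> A \<or> (y, x) \<in> A"
        using tour w by (auto simp: induces_tournament_def)
      moreover have "in_nbhd A w \<noteq> {}" using nonempty w by blast
      ultimately obtain a where "a \<in> in_nbhd A w" "\<forall>b\<in>in_nbhd A w. b \<noteq> a \<longrightarrow> (a, b) \<in> A"
        using source_exists[OF og _ _ _ no3] by meson
      then show "\<exists>a. a \<in> in_nbhd A w \<and> (\<forall>b\<in>in_nbhd A w. b \<noteq> a \<longrightarrow> (a, b) \<in> A)"
        by blast
    qed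
    then obtain s where s: "\<forall>w\<in>V. s w \<in> in_nbhd A w \<and> (\<forall>b\<in>in_nbhd A w. b \<noteq> s w \<longrightarrow> (s w, b) \<in> A)"
      by metis
    obtain v where v: "v \<in> V" using cV fin by (metis card.empty ex_in_conv not_one_le_zero)
    define x where "x m = (s ^^ m) v" for m
    have xV: "x m \<in> V" for m
    proof (induction m)
      case 0 then show ?case using v by (simp add: x_def)
    next
      case (Suc m)
      have "(s (x m), x m) \<in> A" using s Suc by (auto simp: in_nbhd_def)
      then show ?case using AV by (auto simp: x_def)
    qed
    have xA: "\<forall>m. (x (Suc m), x m) \<in> A"
      using s xV by (auto simp: in_nbhd_def x_def)
    have xdom: "(x (Suc m), b) \<in> A" if "(b, x m) \<in> A" "b \<noteq> x (Suc m)" for m b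
      using s xV that by (auto simp: in_nbhd_def x_def)
    have distinct: "x a \<noteq> x b" if "a < b" "b \<le> k" for a b
    proof
      assume eq: "x a = x b"
      have w1: "walk A (x b) (b - Suc a) (x (Suc a))"
        using chain_walk[OF xA, of "Suc a" "b - Suc a"] that by simp
      have w2: "walk A (x (Suc a)) 1 (x b)" using xA eq by (auto simp: One_nat_def) (metis)
      have "walk A (x b) (b - Suc a + 1) (x b)" using walk_append[OF w1 w2] .
      then show False using nowalk that by force
    qed
    have disj: "\<not> ((z, x i) \<in> A \<and> (z, x j) \<in> A)" if "i < j" "j < k" for z i j
    proof
      assume zz: "(z, x i) \<in> A \<and> (z, x j) \<in> A"
      have w1: "walk A (x j) (j - Suc i) (x (Suc i))"
        using chain_walk[OF xA, of "Suc i" "j - Suc i"] that by simp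
      show False
      proof (cases "z = x (Suc i)")
        case True
        have w2: "walk A (x (Suc i)) 1 (x j)" using zz True by auto
        have "walk A (x j) (j - Suc i + 1) (x j)" using walk_append[OF w1 w2] .
        then show False using nowalk that by force
      next
        case False
        have "(x (Suc i), z) \<in> A" using xdom zz False by blast
        then have w2: "walk A (x (Suc i)) 2 (x j)" using zz by (auto simp: numeral_2_eq_2)
        have "walk A (x j) (j - Suc i + 2) (x j)" using walk_append[OF w1 w2] .
        moreover have "1 \<le> j - Suc i + 2" "j - Suc i + 2 \<le> k" using that by auto
        ultimately show False using nowalk by blast
      qed
    qed
    define X where "X = x ` {..<k}"
    have injk: "inj_on x {..k}"
      unfolding inj_on_def by (metis atMost_iff distinct linorder_neqE_nat)
    have cardX: "card X = k"
    proof -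
      have "inj_on x {..<k}" by (rule inj_on_subset[OF injk]) auto
      then show ?thesis unfolding X_def by (simp add: card_image)
    qed
    have "card (x ` {..k}) = Suc k" using injk by (simp add: card_image)
    moreover have "x ` {..k} \<subseteq> V" using xV by auto
    ultimately have nk: "Suc k \<le> card V" using fin card_mono by metis
    define V' where "V' = V - X"
    have XV: "X \<subseteq> V" using xV by (auto simp: X_def)
    have sub: "V' \<subseteq> V" by (auto simp: V'_def)
    have cV': "card V' = card V - k" using XV fin cardX
      by (simp add: V'_def card_Diff_subset finite_subset)
    note r = restrict_ok[OF og tour nocyc sub]
    obtain w where w: "w \<in> V'" "real (out_degree (A \<inter> (V' \<times> V')) w) < real (card V') / real k"
      using less.hyps[OF _ k3 r(1) _ r(2) r(3)] cV' nk k3 by fastforce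
    have "card (out_nbhd A w \<inter> (V - V')) \<le> Suc 0"
    proof (subst card_le_Suc0_iff_eq)
      show "finite (out_nbhd A w \<inter> (V - V'))" using fin by auto
      show "\<forall>a1\<in>out_nbhd A w \<inter> (V - V'). \<forall>a2\<in>out_nbhd A w \<inter> (V - V'). a1 = a2"
      proof (intro ballI)
        fix a1 a2 assume a1: "a1 \<in> out_nbhd A w \<inter> (V - V')" and a2: "a2 \<in> out_nbhd A w \<inter> (V - V')"
        then obtain i j where ij: "i < k" "j < k" "a1 = x i" "a2 = x j"
          using XV by (auto simp: V'_def X_def)
        have "(w, x i) \<in> A" "(w, x j) \<in> A" using a1 a2 ij by (auto simp: out_nbhd_def)
        then have "\<not> i < j" "\<not> j < i" using disj ij by blast+
        then show "a1 = a2" using ij by auto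
      qed
    qed
    then have "out_degree A w \<le> out_degree (A \<inter> (V' \<times> V')) w + 1"
      using out_deg_split[OF og w(1) sub] by simp
    then have "real (out_degree A w) \<le> real (out_degree (A \<inter> (V' \<times> V')) w) + 1" by linarith
    also have "\<dots> < real (card V') / real k + 1" using w by simp
    also have "real (card V') / real k + 1 = real (card V) / real k"
      using cV' nk kpos by (simp add: of_nat_diff field_simps)
    finally show ?thesis using w sub by auto
  qed
qed

theorem theorem3p6:
  fixes V :: "'a set" and A :: "('a \<times> 'a) set" and k :: nat
  assumes "k \<ge> 3"
    and "oriented_graph V A"
    and "card V \<ge> 1"
    and "\<forall>x\<in>V. induces_tournament A (in_nbhd A x)"
    and "\<forall>l. l \<le> k \<longrightarrow> \<not> has_dicycle_of_length V A l"
  shows "\<exists>x\<in>V. real (out_degree A x) < real (card V) / real k"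
  using main[OF assms] .

end
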